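(* Let $a,r>0$, $\beta\in\mathbb{R}$, $\theta\in(\theta_0,\frac\pi2)$ with $\tan\theta_0\ge\frac{|\beta|}{\sqrt2}$, and $\lambda\in\Sigma_{\theta,r}$. Then for all $\xi'\in\mathbb{R}^{N-1}$ and $j=1,2$, $${\rm Re}(L_j)\ge C(a,\beta,\theta,r)\big(|\lambda|^{1/2}+1+|\xi'|\big).$$
   Context: $\Sigma_{\theta,r}=\{z\in\mathbb{C}\setminus\{0\}:|\arg z|<\pi-\theta,|z|>r\}$. $z_{1,2}(\lambda)=\frac{2\lambda+a(1+\beta^2/2)\pm\sqrt{a^2(1+\beta^2/2)^2-2\lambda^2\beta^2}}{2(1+\beta^2/2)}$ and $L_j(\lambda,\xi')=\sqrt{|\xi'|^2+z_j(\lambda)}$, the square root with positive real part. *)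

theory Defs
  imports "HOL-Analysis.Analysis"
begin

definition Sigma_sec :: "real \<Rightarrow> real \<Rightarrow> complex set" where
  "Sigma_sec \<theta> r = {z. z \<noteq> 0 \<and> \<bar>Arg z\<bar> < pi - \<theta> \<and> cmod z > r}"

text \<open>z_1 (sign +1) and z_2 (sign -1); the inner square root is the principal one (csqrt).
  Since z_1, z_2 only swap under a change of branch, the statement for j = 1,2 is branch-independent.\<close>
definition zroot :: "real \<Rightarrow> real \<Rightarrow> real \<Rightarrow> complex \<Rightarrow> complex" where
  "zroot s a \<beta> l =
     (2 * l + of_real (a * (1 + \<beta>\<^sup>2 / 2))
       + of_real s * csqrt (of_real (a\<^sup>2 * (1 + \<beta>\<^sup>2 / 2)\<^sup>2) - 2 * l\<^sup>2 * of_real (\<beta>\<^sup>2)))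
     / of_real (2 * (1 + \<beta>\<^sup>2 / 2))"

definition z1 :: "real \<Rightarrow> real \<Rightarrow> complex \<Rightarrow> complex" where
  "z1 a \<beta> l = zroot 1 a \<beta> l"

definition z2 :: "real \<Rightarrow> real \<Rightarrow> complex \<Rightarrow> complex" where
  "z2 a \<beta> l = zroot (-1) a \<beta> l"

definition Lfun :: "(real \<Rightarrow> real \<Rightarrow> complex \<Rightarrow> complex) \<Rightarrow> real \<Rightarrow> real \<Rightarrow> complex \<Rightarrow> 'a::euclidean_space \<Rightarrow> complex" where
  "Lfun z a \<beta> l \<xi> = csqrt (of_real ((norm \<xi>)\<^sup>2) + z a \<beta> l)"

end

theory Submission
  imports Defs
begin

lemma sector_neg:
  fixes z :: complex and \<theta> :: real
  assumes "z \<noteq> 0" "\<bar>Arg z\<bar> < pi - \<theta>" "0 < \<theta>" "\<theta> < pi/2" "Re z < 0"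
  shows "\<bar>Im z\<bar> > tan \<theta> * (- Re z)"
proof -
  define A where "A = Arg z"
  define n where "n = cmod z"
  have n: "n > 0" using assms(1) by (simp add: n_def)
  have rc: "n * cos A = Re z"
    using assms(1) Arg_eq [of z] unfolding A_def n_def by (metis Re_exp exp_Ln norm_exp_eq_Re Arg_def)
  have rs: "n * sin A = Im z"
    using assms(1) Arg_eq [of z] unfolding A_def n_def by (metis Im_exp exp_Ln norm_exp_eq_Re Arg_def)
  have Ab: "-pi < A" "A \<le> pi" unfolding A_def using mpi_less_Arg Arg_le_pi by auto
  have cneg: "cos A < 0" using rc n assms(5) by (metis mult_less_0_iff order_less_asym)
  have cabs: "cos \<bar>A\<bar> = cos A" by (simp add: abs_if)
  have sabs: "sin \<bar>A\<bar> = \<bar>sin A\<bar>"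
  proof (cases "A \<ge> 0")
    case True then show ?thesis using Ab sin_ge_zero by auto
  next
    case False then show ?thesis using Ab sin_ge_zero[of "-A"] by auto
  qed
  define \<phi> where "\<phi> = pi - \<bar>A\<bar>"
  have "\<bar>A\<bar> > pi/2"
  proof (rule ccontr)
    assume "\<not> \<bar>A\<bar> > pi/2"
    then have "cos \<bar>A\<bar> \<ge> 0" by (intro cos_ge_zero) auto
    then show False using cabs cneg by simp
  qed
  then have ph: "\<theta> < \<phi>" "\<phi> < pi/2" using assms(2) by (auto simp: \<phi>_def A_def)
  have cph: "cos \<phi> = - cos A" using cabs by (simp add: \<phi>_def)
  have sph: "sin \<phi> = \<bar>sin A\<bar>" using sabs by (simp add: \<phi>_def)
  have "tan \<theta> < tan \<phi>" using tan_monotone[of \<theta> \<phi>] ph assms(3) by auto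
  moreover have "cos \<phi> > 0" using cph cneg by simp
  ultimately have "tan \<theta> * cos \<phi> < sin \<phi>" by (simp add: tan_def field_simps)
  then have "n * (tan \<theta> * cos \<phi>) < n * sin \<phi>" using n by simp
  moreover have "\<bar>Im z\<bar> = n * \<bar>sin A\<bar>" using rs n by (metis abs_mult abs_of_pos)
  moreover have "tan \<theta> * (- Re z) = n * (tan \<theta> * cos \<phi>)" using rc cph by (simp add: algebra_simps)
  ultimately show ?thesis using sph by simp
qed


lemma sq_root_bound:
  fixes t A B :: real
  assumes "t \<ge> 0" "t * (t - A) = B\<^sup>2"
  shows "t \<le> max A 0 + \<bar>B\<bar>"
proof (rule ccontr)
  assume "\<not> t \<le> max A 0 + \<bar>B\<bar>"
  then have h1: "t > max A 0 + \<bar>B\<bar>" by simp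
  then have "t - A > \<bar>B\<bar>" "t > \<bar>B\<bar>" by auto
  then have "t * (t - A) > \<bar>B\<bar> * \<bar>B\<bar>"
    by (meson abs_ge_zero le_less_trans mult_strict_mono')
  then show False using assms(2) by (simp add: power2_eq_square)
qed

lemma core:
  fixes k T h ux uy d e m \<eta> :: real
  assumes k: "k \<ge> 0" and T: "T > k" and h: "h > 0"
    and eta: "\<eta> = (T - k) / (4 * (1 + T))"
    and m0: "m > 0" and m1: "m \<le> 1 / (4 * (1 + k\<^sup>2))" and m2: "m \<le> (T - k) / 4"
    and m3: "m \<le> T * \<eta> / (2 * (\<eta> + k\<^sup>2))"
    and ux: "ux > h" and uy: "\<bar>uy\<bar> \<le> m * (ux - h)"
    and eq1: "d\<^sup>2 - e\<^sup>2 = (1 + k\<^sup>2) * h\<^sup>2 - k\<^sup>2 * (ux\<^sup>2 - uy\<^sup>2)"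
    and eq2: "d * e = - k\<^sup>2 * ux * uy"
  shows "ux + d > 0 \<and> \<bar>uy + e\<bar> \<le> T * (ux + d)"
proof -
  define A where "A = (1 + k\<^sup>2) * h\<^sup>2 - k\<^sup>2 * (ux\<^sup>2 - uy\<^sup>2)"
  define B where "B = - k\<^sup>2 * ux * uy"
  have Tpos: "T > 0" using k T by linarith
  have etapos: "\<eta> > 0" using eta T Tpos by simp
  have uxpos: "ux > 0" using ux h by linarith
  have uy': "\<bar>uy\<bar> \<le> m * ux" using uy m0 h
    by (smt (verit, best) mult_left_mono)
  have dd: "d\<^sup>2 * (d\<^sup>2 - A) = B\<^sup>2"
  proof -
    have "d\<^sup>2 - A = e\<^sup>2" using eq1 A_def by simp
    then have "d\<^sup>2 * (d\<^sup>2 - A) = (d * e)\<^sup>2" by (simp add: power_mult_distrib)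
    then show ?thesis using eq2 B_def by simp
  qed
  have S1: "d\<^sup>2 \<le> max A 0 + \<bar>B\<bar>" by (rule sq_root_bound[OF _ dd]) simp
  have absB: "\<bar>B\<bar> = k\<^sup>2 * ux * \<bar>uy\<bar>" using uxpos by (simp add: B_def abs_mult)
  have km: "k\<^sup>2 * m \<le> 1/4"
  proof -
    have "k\<^sup>2 * m \<le> k\<^sup>2 * (1 / (4 * (1 + k\<^sup>2)))" using m1 by (intro mult_left_mono) auto
    also have "\<dots> \<le> 1/4"
    proof -
      have p: "0 < 1 + k\<^sup>2" by (simp add: add_pos_nonneg)
      then show ?thesis by (simp add: field_simps)
    qed
    finally show ?thesis .
  qed
  have m14: "m \<le> 1/4"
  proof -
    have "1 / (4 * (1 + k\<^sup>2)) \<le> 1/4" by (rule divide_left_mono) (auto simp: add_pos_nonneg)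
    then show ?thesis using m1 by simp
  qed
  have X1: "ux + d \<ge> (ux - h) / 2"
  proof (cases "d \<ge> 0")
    case True then show ?thesis using ux h by (simp add: field_simps)
  next
    case False
    show ?thesis
    proof (cases "A \<ge> 0")
      case True
      have a1: "uy\<^sup>2 \<le> (ux - h) * (ux + h) / 4"
      proof -
        have "uy\<^sup>2 \<le> (m * (ux - h))\<^sup>2" using uy by (metis abs_ge_zero power_mono power2_abs)
        also have "\<dots> = m\<^sup>2 * (ux - h) * (ux - h)" by (simp add: power2_eq_square)
        also have "\<dots> \<le> (1/4) * (ux - h) * (ux + h)"
        proof -
          have "m * m \<le> (1/4) * (1/4)" using m14 m0 by (intro mult_mono) auto
          then have "m\<^sup>2 \<le> 1/4" by (simp add: power2_eq_square)
          then show ?thesis using ux h by (intro mult_mono) auto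
        qed
        finally show ?thesis by simp
      qed
      have a2: "ux * \<bar>uy\<bar> \<le> (ux - h) * (ux + h) / 2"
      proof -
        have "ux * \<bar>uy\<bar> \<le> ux * (m * (ux - h))" using uy uxpos by (simp add: mult_left_mono)
        also have "\<dots> \<le> ux * ((1/2) * (ux - h))"
        proof -
          have "m \<le> 1/2" using m14 by simp
          then show ?thesis using ux uxpos by (intro mult_left_mono mult_right_mono) auto
        qed
        also have "\<dots> \<le> (ux - h) * (ux + h) / 2"
        proof -
          have "ux * (ux - h) \<le> (ux + h) * (ux - h)" using ux h by (intro mult_right_mono) auto
          then show ?thesis by (simp add: mult.commute)
        qed
        finally show ?thesis .
      qed
      have "d\<^sup>2 \<le> A + \<bar>B\<bar>" using S1 True by simp
      also have "\<dots> \<le> h\<^sup>2"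
      proof -
        have "k\<^sup>2 * (uy\<^sup>2 + ux * \<bar>uy\<bar>) \<le> k\<^sup>2 * ((ux - h) * (ux + h))"
        proof -
          have "0 \<le> (ux - h) * (ux + h)" using ux h by simp
          then show ?thesis using a1 a2 by (intro mult_left_mono) (linarith, simp)
        qed
        then show ?thesis unfolding A_def absB by (simp add: algebra_simps power2_eq_square)
      qed
      finally have dh: "d\<^sup>2 \<le> h\<^sup>2" .
      have "\<bar>d\<bar> \<le> h" using power2_le_iff_abs_le[of h d] dh h by simp
      then have "-d \<le> h" by simp
      have "(ux + d) * (ux - d) \<ge> (ux - h) * (ux + h)" using dh by (simp add: algebra_simps power2_eq_square)
      moreover have "ux - d \<le> 2 * (ux + h)" using \<open>-d \<le> h\<close> ux h by (simp add: algebra_simps)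
      moreover have "ux + d > 0" using \<open>-d \<le> h\<close> ux False by linarith
      ultimately have "(ux - h) * (ux + h) \<le> (ux + d) * (2 * (ux + h))"
        by (meson less_imp_le mult_left_mono order_trans)
      then have "(ux - h) * (ux + h) \<le> (2 * (ux + d)) * (ux + h)" by (simp add: algebra_simps)
      then have "ux - h \<le> 2 * (ux + d)" using ux h by (meson add_pos_pos less_trans mult_right_le_imp_le)
      then show ?thesis by simp
    next
      case False
      have "d\<^sup>2 \<le> \<bar>B\<bar>" using S1 False by simp
      also have "\<dots> \<le> k\<^sup>2 * ux * (m * ux)" unfolding absB using uy' k uxpos
        by (simp add: mult_left_mono)
      also have "\<dots> = (k\<^sup>2 * m) * ux\<^sup>2" by (simp add: power2_eq_square)
      also have "\<dots> \<le> (1/4) * ux\<^sup>2" using km by (intro mult_right_mono) auto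
      also have "\<dots> = (ux/2)\<^sup>2" by (simp add: power2_eq_square)
      finally have "d\<^sup>2 \<le> (ux/2)\<^sup>2" .
      then have "\<bar>d\<bar> \<le> ux/2" using power2_le_iff_abs_le[of "ux/2" d] uxpos by simp
      then show ?thesis using h by (auto simp: field_simps abs_le_iff)
    qed
  qed
  have x1pos: "ux + d > 0" using X1 ux by (simp add: field_simps)
  have x2eq: "(uy + e) * d = uy * (d - k\<^sup>2 * ux)" using eq2 by (simp add: algebra_simps)
  have "\<bar>uy + e\<bar> \<le> T * (ux + d)"
  proof (cases "\<bar>d\<bar> \<ge> \<eta> * ux")
    case True
    have dpos: "\<bar>d\<bar> > 0" using True etapos uxpos by (smt (verit) mult_pos_pos)
    have "\<bar>uy + e\<bar> * \<bar>d\<bar> = \<bar>uy\<bar> * \<bar>d - k\<^sup>2 * ux\<bar>" using x2eq by (metis abs_mult)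
    also have "\<dots> \<le> \<bar>uy\<bar> * (\<bar>d\<bar> + k\<^sup>2 * ux)"
    proof -
      have "\<bar>d - k\<^sup>2 * ux\<bar> \<le> \<bar>d\<bar> + k\<^sup>2 * ux"
        using abs_triangle_ineq4[of d "k\<^sup>2 * ux"] uxpos by (simp add: abs_mult)
      then show ?thesis by (intro mult_left_mono) auto
    qed
    also have "\<dots> \<le> \<bar>uy\<bar> * (\<bar>d\<bar> + k\<^sup>2 * (\<bar>d\<bar> / \<eta>))"
    proof -
      have "ux \<le> \<bar>d\<bar> / \<eta>" using True etapos by (simp add: field_simps)
      then show ?thesis by (intro mult_left_mono add_left_mono) (auto intro: mult_left_mono)
    qed
    also have "\<dots> = (\<bar>uy\<bar> * (1 + k\<^sup>2 / \<eta>)) * \<bar>d\<bar>" by (simp add: algebra_simps)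
    finally have "\<bar>uy + e\<bar> \<le> \<bar>uy\<bar> * (1 + k\<^sup>2 / \<eta>)" using dpos by simp
    also have "\<dots> \<le> (m * (ux - h)) * (1 + k\<^sup>2 / \<eta>)" using uy etapos by (intro mult_right_mono) auto
    also have "\<dots> \<le> (m * (2 * (ux + d))) * (1 + k\<^sup>2 / \<eta>)" using X1 m0 etapos
      by (intro mult_right_mono mult_left_mono) auto
    also have "\<dots> = (2 * m * (\<eta> + k\<^sup>2) / \<eta>) * (ux + d)" using etapos by (simp add: field_simps)
    also have "\<dots> \<le> T * (ux + d)"
    proof -
      have "2 * m * (\<eta> + k\<^sup>2) / \<eta> \<le> T"
      proof -
      have p: "0 < 2 * (\<eta> + k\<^sup>2)" using etapos by (simp add: add_pos_nonneg)
      have "m * (2 * (\<eta> + k\<^sup>2)) \<le> T * \<eta>" using m3 p by (simp add: pos_le_divide_eq)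
      then have "2 * m * (\<eta> + k\<^sup>2) \<le> T * \<eta>" by (simp add: algebra_simps)
      then show "2 * m * (\<eta> + k\<^sup>2) / \<eta> \<le> T" using etapos by (simp add: pos_divide_le_eq)
      qed
      then show ?thesis using x1pos by (intro mult_right_mono) auto
    qed
    finally show ?thesis .
  next
    case False
    have "e\<^sup>2 = d\<^sup>2 - A" using eq1 A_def by simp
    also have "\<dots> \<le> (\<eta> * ux)\<^sup>2 + k\<^sup>2 * ux\<^sup>2"
    proof -
      have "d\<^sup>2 \<le> (\<eta> * ux)\<^sup>2" using power2_le_iff_abs_le[of "\<eta> * ux" d] False etapos uxpos by simp
      moreover have "- A \<le> k\<^sup>2 * ux\<^sup>2" unfolding A_def using h by (simp add: algebra_simps)
      ultimately show ?thesis by linarith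
    qed
    also have "\<dots> \<le> ((\<eta> + k) * ux)\<^sup>2" using etapos k uxpos by (simp add: power2_eq_square algebra_simps)
    finally have "e\<^sup>2 \<le> ((\<eta> + k) * ux)\<^sup>2" .
    then have "\<bar>e\<bar> \<le> (\<eta> + k) * ux" using power2_le_iff_abs_le[of "(\<eta> + k) * ux" e] etapos k uxpos by simp
    then have "\<bar>uy + e\<bar> \<le> m * ux + (\<eta> + k) * ux" using uy' by linarith
    also have "\<dots> = (m + \<eta> + k) * ux" by (simp add: algebra_simps)
    also have "\<dots> \<le> (T * (1 - \<eta>)) * ux"
    proof -
      have "\<eta> * (1 + T) = (T - k) / 4" using eta Tpos by (simp add: field_simps)
      then have "m + \<eta> + k \<le> T * (1 - \<eta>)" using m2 T by (simp add: algebra_simps)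
      then show ?thesis using uxpos by (simp add: mult_right_mono)
    qed
    also have "\<dots> \<le> T * (ux + d)"
    proof -
      have "(1 - \<eta>) * ux \<le> ux + d" using False by (simp add: algebra_simps)
      then have "T * ((1 - \<eta>) * ux) \<le> T * (ux + d)" using Tpos by (intro mult_left_mono) auto
      then show ?thesis by (simp add: algebra_simps)
    qed
    finally show ?thesis .
  qed
  then show ?thesis using x1pos by simp
qed


lemma zroot_quad:
  fixes s a \<beta> :: real and l :: complex
  assumes s: "s = 1 \<or> s = -1"
  defines "z \<equiv> zroot s a \<beta> l"
  shows "(z - l - of_real (a/2))\<^sup>2 = of_real ((1 + \<beta>\<^sup>2/2) * (a/2)\<^sup>2) - of_real (\<beta>\<^sup>2/2) * (of_real (a/2) - z)\<^sup>2"
proof -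
  define b where "b = 1 + \<beta>\<^sup>2 / 2"
  define S where "S = csqrt (of_real (a\<^sup>2 * b\<^sup>2) - 2 * l\<^sup>2 * of_real (\<beta>\<^sup>2))"
  have bpos: "b > 0" unfolding b_def by (simp add: add_pos_nonneg)
  have S2: "S\<^sup>2 = of_real (a\<^sup>2 * b\<^sup>2) - 2 * l\<^sup>2 * of_real (\<beta>\<^sup>2)" unfolding S_def by simp
  have s2: "(of_real s :: complex)\<^sup>2 = 1" using s by auto
  have z_eq: "z = (2*l + of_real (a*b) + of_real s * S) / of_real (2*b)"
    unfolding z_def zroot_def S_def b_def by simp
  have zdef: "of_real (2 * b) * z = 2 * l + of_real (a * b) + of_real s * S"
    using bpos unfolding z_eq by simp
  have Q: "(of_real (2 * b) * z - 2 * l - of_real (a * b))\<^sup>2 = of_real (a\<^sup>2 * b\<^sup>2) - 2 * l\<^sup>2 * of_real (\<beta>\<^sup>2)"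
    using zdef S2 s2 by (simp add: power_mult_distrib)
  have bb: "of_real b = (1 + of_real (\<beta>\<^sup>2) / 2 :: complex)" unfolding b_def by simp
  have "of_real (4 * b) * ((z - l - of_real (a/2))\<^sup>2 - (of_real ((1 + \<beta>\<^sup>2/2) * (a/2)\<^sup>2) - of_real (\<beta>\<^sup>2/2) * (of_real (a/2) - z)\<^sup>2))
     = (of_real (2 * b) * z - 2 * l - of_real (a * b))\<^sup>2 - (of_real (a\<^sup>2 * b\<^sup>2) - 2 * l\<^sup>2 * of_real (\<beta>\<^sup>2))"
    unfolding b_def by (simp add: algebra_simps power2_eq_square)
  then have "of_real (4 * b) * ((z - l - of_real (a/2))\<^sup>2 - (of_real ((1 + \<beta>\<^sup>2/2) * (a/2)\<^sup>2) - of_real (\<beta>\<^sup>2/2) * (of_real (a/2) - z)\<^sup>2)) = 0"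
    using Q by simp
  then show ?thesis using bpos by simp
qed

lemma zroot_prod:
  fixes a \<beta> :: real and l :: complex
  shows "zroot 1 a \<beta> l * zroot (-1) a \<beta> l = l * (l + of_real a) / of_real (1 + \<beta>\<^sup>2/2)"
proof -
  define b where "b = 1 + \<beta>\<^sup>2 / 2"
  define S where "S = csqrt (of_real (a\<^sup>2 * b\<^sup>2) - 2 * l\<^sup>2 * of_real (\<beta>\<^sup>2))"
  have bpos: "b > 0" unfolding b_def by (simp add: add_pos_nonneg)
  have S2: "S\<^sup>2 = of_real (a\<^sup>2 * b\<^sup>2) - 2 * l\<^sup>2 * of_real (\<beta>\<^sup>2)" unfolding S_def by simp
  have e1: "zroot 1 a \<beta> l = (2*l + of_real (a*b) + S) / of_real (2*b)"
    unfolding zroot_def S_def b_def by simp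
  have e2: "zroot (-1) a \<beta> l = (2*l + of_real (a*b) - S) / of_real (2*b)"
    unfolding zroot_def S_def b_def by simp
  have "zroot 1 a \<beta> l * zroot (-1) a \<beta> l = ((2*l + of_real (a*b))\<^sup>2 - S\<^sup>2) / of_real (4*b\<^sup>2)"
    unfolding e1 e2 by (simp add: power2_eq_square algebra_simps)
  also have "\<dots> = ((2*l + of_real (a*b))\<^sup>2 - (of_real (a\<^sup>2 * b\<^sup>2) - 2 * l\<^sup>2 * of_real (\<beta>\<^sup>2))) / of_real (4*b\<^sup>2)"
    using S2 by simp
  also have "\<dots> = l * (l + of_real a) / of_real b"
  proof -
    have bb: "of_real (\<beta>\<^sup>2) = (2 * of_real b - 2 :: complex)" unfolding b_def by simp
    show ?thesis using bpos unfolding bb by (simp add: field_simps power2_eq_square)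
  qed
  finally show ?thesis unfolding b_def .
qed

lemma div_le_self_real: "0 \<le> x \<Longrightarrow> 1 \<le> b \<Longrightarrow> x / b \<le> (x::real)"
  using divide_left_mono[of 1 b x] by simp

lemma zroot_norm:
  fixes s a \<beta> :: real and l :: complex
  assumes s: "s = 1 \<or> s = -1" and a: "a > 0"
  shows "cmod (zroot s a \<beta> l) \<le> (1 + \<bar>\<beta>\<bar> + a) * (cmod l + 1)"
proof -
  define b where "b = 1 + \<beta>\<^sup>2 / 2"
  define S where "S = csqrt (of_real (a\<^sup>2 * b\<^sup>2) - 2 * l\<^sup>2 * of_real (\<beta>\<^sup>2))"
  have b1: "b \<ge> 1" unfolding b_def by simp
  have e: "zroot s a \<beta> l = (2*l + of_real (a*b) + of_real s * S) / of_real (2*b)"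
    unfolding zroot_def S_def b_def by simp
  have nS: "cmod S \<le> a * b + sqrt 2 * \<bar>\<beta>\<bar> * cmod l"
  proof -
    have "cmod S = sqrt (cmod (of_real (a\<^sup>2 * b\<^sup>2) - 2 * l\<^sup>2 * of_real (\<beta>\<^sup>2)))" unfolding S_def by simp
    also have "\<dots> \<le> sqrt (a\<^sup>2 * b\<^sup>2 + 2 * (cmod l)\<^sup>2 * \<beta>\<^sup>2)"
    proof -
      have "cmod (of_real (a\<^sup>2 * b\<^sup>2) - 2 * l\<^sup>2 * of_real (\<beta>\<^sup>2)) \<le> cmod (of_real (a\<^sup>2 * b\<^sup>2) :: complex) + cmod (2 * l\<^sup>2 * of_real (\<beta>\<^sup>2))"
        by (rule norm_triangle_ineq4)
      also have "\<dots> = a\<^sup>2 * b\<^sup>2 + 2 * (cmod l)\<^sup>2 * \<beta>\<^sup>2" by (simp add: norm_mult norm_power)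
      finally show ?thesis by simp
    qed
    also have "\<dots> \<le> a * b + sqrt 2 * \<bar>\<beta>\<bar> * cmod l"
    proof (rule real_le_lsqrt)
      show "0 \<le> a * b + sqrt 2 * \<bar>\<beta>\<bar> * cmod l" using a b1 by simp
      have "(a * b + sqrt 2 * \<bar>\<beta>\<bar> * cmod l)\<^sup>2 = a\<^sup>2 * b\<^sup>2 + 2 * (cmod l)\<^sup>2 * \<beta>\<^sup>2 + 2 * (a * b) * (sqrt 2 * \<bar>\<beta>\<bar> * cmod l)"
        by (simp add: power2_eq_square algebra_simps)
      moreover have "0 \<le> 2 * (a * b) * (sqrt 2 * \<bar>\<beta>\<bar> * cmod l)" using a b1 by simp
      ultimately show "a\<^sup>2 * b\<^sup>2 + 2 * (cmod l)\<^sup>2 * \<beta>\<^sup>2 \<le> (a * b + sqrt 2 * \<bar>\<beta>\<bar> * cmod l)\<^sup>2" by linarith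
    qed
    finally show ?thesis .
  qed
  have ns: "cmod (of_real s :: complex) = 1" using s by auto
  have "cmod (2*l + of_real (a*b) + of_real s * S) \<le> cmod (2*l) + cmod (of_real (a*b) :: complex) + cmod (of_real s * S)"
    by (meson norm_triangle_ineq order_trans add_right_mono)
  also have "\<dots> = 2 * cmod l + a * b + cmod S" using a b1 ns by (simp add: norm_mult)
  also have "\<dots> \<le> 2 * cmod l + 2 * a * b + sqrt 2 * \<bar>\<beta>\<bar> * cmod l" using nS by simp
  finally have num: "cmod (2*l + of_real (a*b) + of_real s * S) \<le> 2 * cmod l + 2 * a * b + sqrt 2 * \<bar>\<beta>\<bar> * cmod l" .
  have "cmod (zroot s a \<beta> l) = cmod (2*l + of_real (a*b) + of_real s * S) / (2 * b)"
    unfolding e using b1 by (simp add: norm_divide)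
  also have "\<dots> \<le> (2 * cmod l + 2 * a * b + sqrt 2 * \<bar>\<beta>\<bar> * cmod l) / (2 * b)"
    using num b1 by (intro divide_right_mono) auto
  also have "\<dots> = cmod l / b + a + (sqrt 2 / 2) * \<bar>\<beta>\<bar> * cmod l / b" using b1 by (simp add: field_simps)
  also have "\<dots> \<le> cmod l + a + \<bar>\<beta>\<bar> * cmod l"
  proof -
    have "cmod l / b \<le> cmod l" using b1 by (intro div_le_self_real) auto
    moreover have "(sqrt 2 / 2) * \<bar>\<beta>\<bar> * cmod l / b \<le> \<bar>\<beta>\<bar> * cmod l"
    proof -
      have "sqrt 2 / 2 \<le> (1::real)" by (simp add: real_sqrt_le_iff[of 2 4, simplified])
      then have "(sqrt 2 / 2) * (\<bar>\<beta>\<bar> * cmod l) \<le> 1 * (\<bar>\<beta>\<bar> * cmod l)" by (intro mult_right_mono) auto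
      moreover have "(sqrt 2 / 2) * \<bar>\<beta>\<bar> * cmod l / b \<le> (sqrt 2 / 2) * \<bar>\<beta>\<bar> * cmod l"
        using b1 by (intro div_le_self_real) auto
      ultimately show ?thesis by (simp add: mult.assoc)
    qed
    ultimately show ?thesis by linarith
  qed
  also have "\<dots> \<le> (1 + \<bar>\<beta>\<bar> + a) * (cmod l + 1)" using a by (simp add: algebra_simps)
  finally show ?thesis .
qed


lemma sector_sum:
  fixes z :: complex and s m :: real
  assumes m: "m > 0" and s: "s \<ge> 0" and nb: "\<not> (Re z < 0 \<and> \<bar>Im z\<bar> \<le> m * (- Re z))"
  shows "cmod (of_real s + z) + Re (of_real s + z) \<ge> (m\<^sup>2 / (8 * (1 + m\<^sup>2))) * (s + cmod z)"
proof -
  define x where "x = Re z"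
  define y where "y = Im z"
  define W where "W = cmod (of_real s + z)"
  define \<mu> where "\<mu> = m\<^sup>2 / (1 + m\<^sup>2)"
  define K where "K = \<mu> / 8"
  have Kdef: "m\<^sup>2 / (8 * (1 + m\<^sup>2)) = K" unfolding K_def \<mu>_def by simp
  have p1: "0 < 1 + m\<^sup>2" by (simp add: add_pos_nonneg)
  have mu0: "0 < \<mu>" unfolding \<mu>_def using m p1 by simp
  have mu1: "\<mu> \<le> 1" unfolding \<mu>_def using p1 by simp
  have K0: "0 < K" "K \<le> 1/8" unfolding K_def using mu0 mu1 by auto
  have nz: "(cmod z)\<^sup>2 = x\<^sup>2 + y\<^sup>2" unfolding x_def y_def by (simp add: cmod_power2)
  have nw: "W\<^sup>2 = (s + x)\<^sup>2 + y\<^sup>2" unfolding W_def x_def y_def by (simp add: cmod_power2)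
  have rw: "Re (of_real s + z) = s + x" unfolding x_def by simp
  have W0: "W \<ge> 0" unfolding W_def by simp
  have Wy: "W \<ge> \<bar>y\<bar>"
    using nw W0 by (metis abs_le_square_iff abs_of_nonneg le_add_same_cancel2 zero_le_power2)
  have Wx: "W \<ge> \<bar>s + x\<bar>"
    using nw W0 by (metis abs_le_square_iff abs_of_nonneg le_add_same_cancel1 zero_le_power2)
  show ?thesis unfolding Kdef rw W_def[symmetric]
  proof (cases "x \<ge> 0")
    case True
    have "(cmod z)\<^sup>2 \<le> W\<^sup>2" using nz nw True s by (simp add: power2_eq_square add_mono mult_mono)
    then have "cmod z \<le> W" using W0 by (simp add: power2_le_iff_abs_le)
    then have "s + cmod z \<le> W + (s + x)" using True by simp
    moreover have "K * (s + cmod z) \<le> s + cmod z" using K0 s by (intro mult_left_le_one_le) auto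
    ultimately show "K * (s + cmod z) \<le> W + (s + x)" by linarith
  next
    case False
    then have y1: "\<bar>y\<bar> > m * (- x)" using nb unfolding x_def y_def by auto
    have "y\<^sup>2 \<ge> (m * x)\<^sup>2"
    proof -
      have "\<bar>m * x\<bar> \<le> \<bar>y\<bar>" using y1 m False by (simp add: abs_mult)
      then show ?thesis by (simp add: abs_le_square_iff)
    qed
    then have "y\<^sup>2 * (1 + m\<^sup>2) \<ge> m\<^sup>2 * (x\<^sup>2 + y\<^sup>2)" by (simp add: power_mult_distrib algebra_simps)
    then have ymu: "y\<^sup>2 \<ge> \<mu> * (cmod z)\<^sup>2" unfolding \<mu>_def nz using p1 by (simp add: field_simps)
    have zpos: "cmod z > 0" using False x_def by auto
    show "K * (s + cmod z) \<le> W + (s + x)"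
    proof (cases "s + x \<ge> 0")
      case True
      show ?thesis
      proof (cases "s \<ge> 2 * cmod z")
        case True
        have "\<bar>x\<bar> \<le> cmod z" unfolding x_def by (rule abs_Re_le_cmod)
        then have "s + x \<ge> (s + cmod z) / 3" using True False by (simp add: field_simps)
        moreover have "K * (s + cmod z) \<le> (1/3) * (s + cmod z)" using K0 s zpos by (intro mult_right_mono) auto
        ultimately show ?thesis using W0 by linarith
      next
        case False
        have "(3 * K * cmod z)\<^sup>2 \<le> \<mu> * (cmod z)\<^sup>2"
        proof -
          have "(3 * K)\<^sup>2 \<le> \<mu>" unfolding K_def using mu0 mu1
            by (simp add: power2_eq_square field_simps)
          then show ?thesis by (simp add: power_mult_distrib mult_right_mono)
        qed
        then have "3 * K * cmod z \<le> \<bar>y\<bar>" using ymu K0 zpos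
          by (metis abs_le_square_iff abs_of_nonneg order_trans mult_nonneg_nonneg less_imp_le zero_le_numeral)
        moreover have "K * (s + cmod z) \<le> 3 * K * cmod z" using False K0 by (simp add: algebra_simps)
        ultimately show ?thesis using Wy True by linarith
      qed
    next
      case neg: False
      have sx: "s < cmod z" using neg abs_Re_le_cmod[of z] unfolding x_def by linarith
      have prod: "(W + (s + x)) * (W - (s + x)) = y\<^sup>2" using nw by (simp add: power2_eq_square algebra_simps)
      have ge0: "W + (s + x) \<ge> 0" using Wx by linarith
      have le: "W - (s + x) \<le> 4 * cmod z"
      proof -
        have "W \<le> cmod (of_real s :: complex) + cmod z" unfolding W_def by (rule norm_triangle_ineq)
        then have "W \<le> s + cmod z" using s by simp
        then show ?thesis using sx Wx by linarith
      qed
      have "\<mu> * (cmod z)\<^sup>2 \<le> (W + (s + x)) * (4 * cmod z)"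
        using ymu prod ge0 le by (metis mult_left_mono order_trans)
      then have "(\<mu> * cmod z) * cmod z \<le> (4 * (W + (s + x))) * cmod z" by (simp add: power2_eq_square algebra_simps)
      then have "\<mu> * cmod z \<le> 4 * (W + (s + x))" using zpos by (rule mult_right_le_imp_le)
      then have "\<mu> * cmod z / 4 \<le> W + (s + x)" by simp
      moreover have "K * (s + cmod z) \<le> \<mu> * cmod z / 4" unfolding K_def using sx mu0
        by (simp add: field_simps)
      ultimately show ?thesis by linarith
    qed
  qed
qed


lemma not_bad:
  fixes k T m \<eta> a \<beta> \<theta> s :: real and l :: complex
  assumes k: "k \<ge> 0" "k\<^sup>2 = \<beta>\<^sup>2 / 2" and T: "T = tan \<theta>" "k < T"
    and th: "0 < \<theta>" "\<theta> < pi/2" and a: "a > 0"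
    and eta: "\<eta> = (T - k) / (4 * (1 + T))"
    and m0: "m > 0" and m1: "m \<le> 1 / (4 * (1 + k\<^sup>2))" and m2: "m \<le> (T - k) / 4"
    and m3: "m \<le> T * \<eta> / (2 * (\<eta> + k\<^sup>2))"
    and l: "l \<noteq> 0" "\<bar>Arg l\<bar> < pi - \<theta>" and s: "s = 1 \<or> s = -1"
  shows "\<not> (Re (zroot s a \<beta> l) < 0 \<and> \<bar>Im (zroot s a \<beta> l)\<bar> \<le> m * (- Re (zroot s a \<beta> l)))"
proof
  assume bad: "Re (zroot s a \<beta> l) < 0 \<and> \<bar>Im (zroot s a \<beta> l)\<bar> \<le> m * (- Re (zroot s a \<beta> l))"
  define z where "z = zroot s a \<beta> l"
  define h where "h = a / 2"
  define U where "U = of_real h - z"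
  define D where "D = z - l - of_real h"
  have hpos: "h > 0" using a h_def by simp
  have q: "D\<^sup>2 = of_real ((1 + \<beta>\<^sup>2/2) * h\<^sup>2) - of_real (\<beta>\<^sup>2/2) * U\<^sup>2"
    using zroot_quad[OF s, of a \<beta> l] unfolding D_def U_def h_def z_def by simp
  have e2: "\<beta>\<^sup>2 / 2 = k\<^sup>2" using k(2) by simp
  have q': "D\<^sup>2 = of_real ((1 + k\<^sup>2) * h\<^sup>2) - of_real (k\<^sup>2) * U\<^sup>2" using q by (simp only: e2)
  have re: "(Re D)\<^sup>2 - (Im D)\<^sup>2 = (1 + k\<^sup>2) * h\<^sup>2 - k\<^sup>2 * ((Re U)\<^sup>2 - (Im U)\<^sup>2)"
  proof -
    have "Re (D\<^sup>2) = Re (of_real ((1 + k\<^sup>2) * h\<^sup>2) - of_real (k\<^sup>2) * U\<^sup>2)" using q' by simp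
    then show ?thesis by (simp add: Re_power2)
  qed
  have im: "Re D * Im D = - k\<^sup>2 * Re U * Im U"
  proof -
    have i1: "Im (D\<^sup>2) = Im (of_real ((1 + k\<^sup>2) * h\<^sup>2) - of_real (k\<^sup>2) * U\<^sup>2)" using q' by simp
    have i2: "Im (of_real ((1 + k\<^sup>2) * h\<^sup>2) - of_real (k\<^sup>2) * U\<^sup>2) = - (k\<^sup>2 * Im (U\<^sup>2))" by simp
    have i3: "Im (D\<^sup>2) = 2 * Re D * Im D" "Im (U\<^sup>2) = 2 * Re U * Im U" by (rule Im_power2)+
    have "2 * (Re D * Im D) = 2 * (- k\<^sup>2 * Re U * Im U)" using i1 i2 i3 by (simp only: mult.assoc mult_minus_left)
    then show ?thesis by linarith
  qed
  have ux: "Re U > h" using bad unfolding U_def z_def by simp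
  have uy: "\<bar>Im U\<bar> \<le> m * (Re U - h)" using bad unfolding U_def z_def by simp
  have c: "Re U + Re D > 0 \<and> \<bar>Im U + Im D\<bar> \<le> T * (Re U + Re D)"
    by (rule core[OF k(1) T(2) hpos eta m0 m1 m2 m3 ux uy re im])
  have UD: "U + D = - l" unfolding U_def D_def by simp
  have "Re (U + D) = - Re l" "Im (U + D) = - Im l" using UD by simp_all
  then have "Re U + Re D = - Re l" "Im U + Im D = - Im l" by simp_all
  then have r1: "Re l < 0" and r2: "\<bar>Im l\<bar> \<le> tan \<theta> * (- Re l)" using c T by auto
  have "\<bar>Im l\<bar> > tan \<theta> * (- Re l)" by (rule sector_neg[OF l th r1])
  then show False using r2 by simp
qed

lemma mag:
  fixes a r \<beta> \<theta> T s :: real and l :: complex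
  assumes a: "a > 0" and r: "r > 0" and T: "T = tan \<theta>" and th: "0 < \<theta>" "\<theta> < pi/2"
    and l: "l \<noteq> 0" "\<bar>Arg l\<bar> < pi - \<theta>" "cmod l > r" and s: "s = 1 \<or> s = -1"
  shows "cmod (zroot s a \<beta> l) \<ge> (T / (1 + T)) * (r / (r + 1))\<^sup>2 / ((1 + \<beta>\<^sup>2/2) * (1 + \<bar>\<beta>\<bar> + a)) * (cmod l + 1)"
proof -
  define c where "c = T / (1 + T)"
  define b where "b = 1 + \<beta>\<^sup>2/2"
  define C1 where "C1 = 1 + \<bar>\<beta>\<bar> + a"
  define \<rho> where "\<rho> = r / (r + 1)"
  define n where "n = cmod l"
  have Tpos: "T > 0" using T th tan_gt_zero by simp
  have c0: "0 < c" "c \<le> 1" unfolding c_def using Tpos by auto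
  have b1: "b \<ge> 1" unfolding b_def by simp
  have C1pos: "C1 > 0" unfolding C1_def using a by simp
  have npos: "n > 0" using l n_def by simp
  have la: "cmod (l + of_real a) \<ge> c * n"
  proof (cases "Re l \<ge> 0")
    case True
    have "n\<^sup>2 \<le> (cmod (l + of_real a))\<^sup>2"
      unfolding n_def cmod_power2 using True a by (simp add: power2_eq_square add_mono mult_mono)
    then have "n \<le> cmod (l + of_real a)" by (simp add: power2_le_iff_abs_le)
    moreover have "c * n \<le> n" using c0 npos by (simp add: mult_left_le_one_le)
    ultimately show ?thesis by linarith
  next
    case False
    then have "Re l < 0" by simp
    have si: "\<bar>Im l\<bar> > T * (- Re l)" using sector_neg[OF l(1,2) th \<open>Re l < 0\<close>] T by simp
    have "n \<le> \<bar>Re l\<bar> + \<bar>Im l\<bar>" unfolding n_def by (rule cmod_le)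
    also have "\<bar>Re l\<bar> \<le> \<bar>Im l\<bar> / T" using si Tpos \<open>Re l < 0\<close> by (simp add: field_simps)
    then have "\<bar>Re l\<bar> + \<bar>Im l\<bar> \<le> \<bar>Im l\<bar> / T + \<bar>Im l\<bar>" by simp
    finally have "n \<le> \<bar>Im l\<bar> * ((1 + T) / T)" using Tpos by (simp add: field_simps)
    then have "c * n \<le> \<bar>Im l\<bar>" unfolding c_def using Tpos by (simp add: field_simps)
    also have "\<dots> = \<bar>Im (l + of_real a)\<bar>" by simp
    also have "\<dots> \<le> cmod (l + of_real a)" by (rule abs_Im_le_cmod)
    finally show ?thesis .
  qed
  have prod: "cmod (zroot s a \<beta> l) * cmod (zroot (-s) a \<beta> l) = n * cmod (l + of_real a) / b"
  proof -
    have "zroot s a \<beta> l * zroot (-s) a \<beta> l = l * (l + of_real a) / of_real b"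
      using s zroot_prod[of a \<beta> l] unfolding b_def by (auto simp: mult.commute)
    then have "cmod (zroot s a \<beta> l * zroot (-s) a \<beta> l) = cmod (l * (l + of_real a) / of_real b)" by simp
    then show ?thesis using b1 unfolding n_def by (simp add: norm_mult norm_divide)
  qed
  have s': "-s = 1 \<or> -s = -1" using s by auto
  have oth: "cmod (zroot (-s) a \<beta> l) \<le> C1 * (n + 1)"
    using zroot_norm[OF s' a, of \<beta> l] unfolding C1_def n_def by simp
  have rho: "n \<ge> \<rho> * (n + 1)"
  proof -
    have "r * (n + 1) \<le> n * (r + 1)" using l(3) n_def by (simp add: algebra_simps)
    then show ?thesis unfolding \<rho>_def using r by (simp add: field_simps)
  qed
  have rho0: "\<rho> \<ge> 0" unfolding \<rho>_def using r by simp
  have "c * n * n / b \<le> n * cmod (l + of_real a) / b"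
    using la npos b1 by (intro divide_right_mono) (auto simp: mult.commute mult_left_mono)
  also have "\<dots> = cmod (zroot s a \<beta> l) * cmod (zroot (-s) a \<beta> l)" using prod by simp
  also have "\<dots> \<le> cmod (zroot s a \<beta> l) * (C1 * (n + 1))" using oth by (intro mult_left_mono) auto
  finally have key: "c * n * n / b \<le> cmod (zroot s a \<beta> l) * (C1 * (n + 1))" .
  have "c * (\<rho> * (n + 1)) * (\<rho> * (n + 1)) / b \<le> c * n * n / b"
  proof -
    have "(\<rho> * (n + 1)) * (\<rho> * (n + 1)) \<le> n * n" using rho rho0 npos by (intro mult_mono) auto
    then have "c * ((\<rho> * (n + 1)) * (\<rho> * (n + 1))) \<le> c * (n * n)" using c0 by (intro mult_left_mono) auto
    then show ?thesis using b1 by (intro divide_right_mono) (auto simp: mult.assoc)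
  qed
  with key have key2: "c * (\<rho> * (n + 1)) * (\<rho> * (n + 1)) / b \<le> cmod (zroot s a \<beta> l) * (C1 * (n + 1))" by linarith
  have eqn: "(c * \<rho>\<^sup>2 / (b * C1) * (n + 1)) * (C1 * (n + 1)) = c * (\<rho> * (n + 1)) * (\<rho> * (n + 1)) / b"
  proof -
    have "C1 \<noteq> 0" "b \<noteq> 0" using b1 C1pos by auto
    then show ?thesis by (simp add: power2_eq_square)
  qed
  have "(c * \<rho>\<^sup>2 / (b * C1) * (n + 1)) * (C1 * (n + 1)) \<le> cmod (zroot s a \<beta> l) * (C1 * (n + 1))"
    unfolding eqn by (rule key2)
  then have "c * \<rho>\<^sup>2 / (b * C1) * (n + 1) \<le> cmod (zroot s a \<beta> l)"
    by (rule mult_right_le_imp_le) (use C1pos npos in simp)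
  then show ?thesis unfolding c_def \<rho>_def b_def C1_def n_def .
qed

theorem lemma3p13:
  fixes a r \<beta> \<theta>0 \<theta> :: real
  assumes "a > 0" and "r > 0"
    and "0 \<le> \<theta>0" and "tan \<theta>0 \<ge> \<bar>\<beta>\<bar> / sqrt 2"
    and "\<theta>0 < \<theta>" and "\<theta> < pi / 2"
  shows "\<exists>C>0. \<forall>l\<in>Sigma_sec \<theta> r. \<forall>(\<xi>::'n::euclidean_space). \<forall>z\<in>{z1, z2}.
           Re (Lfun z a \<beta> l \<xi>) \<ge> C * (sqrt (cmod l) + 1 + norm \<xi>)"
proof -
  note a = assms(1) and r = assms(2)
  define T where "T = tan \<theta>"
  define k where "k = \<bar>\<beta>\<bar> / sqrt 2"
  have k0: "k \<ge> 0" unfolding k_def by simp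
  have k2: "k\<^sup>2 = \<beta>\<^sup>2 / 2" unfolding k_def by (simp add: power_divide)
  have th: "0 < \<theta>" "\<theta> < pi/2" using assms by auto
  have "tan \<theta>0 < tan \<theta>" using tan_monotone[of \<theta>0 \<theta>] assms by auto
  then have kT: "k < T" unfolding k_def T_def using assms(4) by linarith
  have Tpos: "T > 0" using k0 kT by linarith
  define \<eta> where "\<eta> = (T - k) / (4 * (1 + T))"
  have etapos: "\<eta> > 0" unfolding \<eta>_def using kT Tpos by simp
  define m where "m = min (1 / (4 * (1 + k\<^sup>2))) (min ((T - k) / 4) (T * \<eta> / (2 * (\<eta> + k\<^sup>2))))"
  have m0: "m > 0" unfolding m_def using kT Tpos etapos by (simp add: add_pos_nonneg)
  have m1: "m \<le> 1 / (4 * (1 + k\<^sup>2))" and m2: "m \<le> (T - k) / 4" and m3: "m \<le> T * \<eta> / (2 * (\<eta> + k\<^sup>2))"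
    unfolding m_def by (meson min.cobounded1 min.cobounded2 order_trans)+
  define c0 where "c0 = (T / (1 + T)) * (r / (r + 1))\<^sup>2 / ((1 + \<beta>\<^sup>2/2) * (1 + \<bar>\<beta>\<bar> + a))"
  have c0pos: "c0 > 0" unfolding c0_def using Tpos r a by (simp add: add_pos_nonneg)
  define K where "K = m\<^sup>2 / (8 * (1 + m\<^sup>2))"
  have Kpos: "K > 0" unfolding K_def using m0 by (simp add: add_pos_nonneg)
  define A where "A = K * min 1 c0 / 2"
  have Apos: "A > 0" unfolding A_def using Kpos c0pos by simp
  define C where "C = sqrt (A / 3)"
  have Cpos: "C > 0" unfolding C_def using Apos by simp
  show ?thesis
  proof (intro exI[of _ C] conjI Cpos ballI allI)
    fix l :: complex and \<xi> :: 'n and z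
    assume lS: "l \<in> Sigma_sec \<theta> r" and zin: "z \<in> {z1, z2}"
    have l: "l \<noteq> 0" "\<bar>Arg l\<bar> < pi - \<theta>" "cmod l > r" using lS unfolding Sigma_sec_def by auto
    obtain s where s: "s = 1 \<or> s = -1" and zz: "z a \<beta> l = zroot s a \<beta> l"
      using zin unfolding z1_def z2_def by auto
    define w where "w = of_real ((norm \<xi>)\<^sup>2) + zroot s a \<beta> l"
    have L: "Lfun z a \<beta> l \<xi> = csqrt w" unfolding Lfun_def w_def zz by simp
    have nb: "\<not> (Re (zroot s a \<beta> l) < 0 \<and> \<bar>Im (zroot s a \<beta> l)\<bar> \<le> m * (- Re (zroot s a \<beta> l)))"
      by (rule not_bad[OF k0 k2 T_def kT th a \<eta>_def m0 m1 m2 m3 l(1,2) s])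
    have mg: "cmod (zroot s a \<beta> l) \<ge> c0 * (cmod l + 1)"
      unfolding c0_def by (rule mag[OF a r T_def th l s])
    have ss: "cmod w + Re w \<ge> K * ((norm \<xi>)\<^sup>2 + cmod (zroot s a \<beta> l))"
      unfolding w_def K_def by (rule sector_sum[OF m0 _ nb]) simp
    have "(norm \<xi>)\<^sup>2 + cmod (zroot s a \<beta> l) \<ge> min 1 c0 * ((norm \<xi>)\<^sup>2 + cmod l + 1)"
    proof -
      have "min 1 c0 * (norm \<xi>)\<^sup>2 \<le> 1 * (norm \<xi>)\<^sup>2" by (intro mult_right_mono) auto
      moreover have "min 1 c0 * (cmod l + 1) \<le> c0 * (cmod l + 1)" by (intro mult_right_mono) auto
      ultimately show ?thesis using mg by (simp add: algebra_simps)
    qed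
    then have "K * (min 1 c0 * ((norm \<xi>)\<^sup>2 + cmod l + 1)) \<le> K * ((norm \<xi>)\<^sup>2 + cmod (zroot s a \<beta> l))"
      using Kpos by (intro mult_left_mono) auto
    with ss have big: "A * ((norm \<xi>)\<^sup>2 + cmod l + 1) \<le> (cmod w + Re w) / 2"
      unfolding A_def by (simp add: field_simps)
    have "C * (sqrt (cmod l) + 1 + norm \<xi>) \<le> sqrt (A * ((norm \<xi>)\<^sup>2 + cmod l + 1))"
    proof (rule real_le_rsqrt)
      have sq: "(sqrt (cmod l))\<^sup>2 = cmod l" by simp
      have "(sqrt (cmod l) + 1 + norm \<xi>)\<^sup>2 \<le> 3 * ((norm \<xi>)\<^sup>2 + cmod l + 1)"
      proof -
        have "0 \<le> (sqrt (cmod l) - 1)\<^sup>2 + (sqrt (cmod l) - norm \<xi>)\<^sup>2 + (1 - norm \<xi>)\<^sup>2" by simp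
        then show ?thesis using sq by (simp add: power2_eq_square algebra_simps)
      qed
      then have i1: "(A / 3) * (sqrt (cmod l) + 1 + norm \<xi>)\<^sup>2 \<le> (A / 3) * (3 * ((norm \<xi>)\<^sup>2 + cmod l + 1))"
        using Apos by (intro mult_left_mono) auto
      have i2: "(C * (sqrt (cmod l) + 1 + norm \<xi>))\<^sup>2 = (A / 3) * (sqrt (cmod l) + 1 + norm \<xi>)\<^sup>2"
        unfolding C_def using Apos by (simp add: power_mult_distrib)
      have i3: "(A / 3) * (3 * ((norm \<xi>)\<^sup>2 + cmod l + 1)) = A * ((norm \<xi>)\<^sup>2 + cmod l + 1)" by simp
      show "(C * (sqrt (cmod l) + 1 + norm \<xi>))\<^sup>2 \<le> A * ((norm \<xi>)\<^sup>2 + cmod l + 1)"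
        unfolding i2 i3[symmetric] by (rule i1)
    qed
    also have "\<dots> \<le> sqrt ((cmod w + Re w) / 2)" using big by simp
    also have "\<dots> = Re (Lfun z a \<beta> l \<xi>)" unfolding L by simp
    finally show "C * (sqrt (cmod l) + 1 + norm \<xi>) \<le> Re (Lfun z a \<beta> l \<xi>)" .
  qed
qed

end
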